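(* Let $k\ge 1$ and let $S_a,S_b\in\{0,1\}^{k^2}$. Let $G$ be the directed weighted graph on the $6k+1$ vertices $\ell_i,\ell_i',r_i,r_i',\overline{\ell}_i$ ($1\le i\le k$) and $p_0,\dots,p_k$ with the following edges: for each $1\le i\le k$, the edges $(\ell_i,r_i)$ and $(r_i',\ell_i')$ of weight $k$, the edge $(p_{i-1},p_i)$ of weight $1$, the edge $(p_{i-1},\ell_i)$ of weight $4k(k-i+1)$, and the edge $(\overline{\ell}_i,p_i)$ of weight $4ki$; for each $1\le i,j\le k$, the edge $(\ell_j',\overline{\ell}_i)$ of weight $k$ if $S_a[(i-1)k+j]=1$, and the edge $(r_i,r_j')$ of weight $k$ if $S_b[(i-1)k+j]=1$. Then $\Pi=\langle p_0,p_1,\dots,p_k\rangle$ is a shortest $p_0$-$p_k$ path in $G$, and: (i) if there is an index $m$ with $S_a[m]=S_b[m]=1$, the weight of a second simple shortest path from $p_0$ to $p_k$ (with respect to $\Pi$) is at most $4k^2+9k-1$; (ii) if there is no such index, every simple $p_0$-$p_k$ path that avoids at least one edge of $\Pi$ has weight at least $4k^2+12k$.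
   Context: Given a graph, vertices $s,t$ and a shortest $s$-$t$ path $P_{st}$, a second simple shortest path is a minimum-weight simple $s$-$t$ path that does not contain at least one edge of $P_{st}$. For a bit string $S$, $S[m]$ denotes its $m$-th bit. *)

theory Defs
  imports Main
begin

text \<open>A directed weighted graph (without parallel edges) is given by a partial weight
function w: w u v = Some c iff (u,v) is an edge of weight c.\<close>

definition path_edges :: "'v list \<Rightarrow> ('v \<times> 'v) set" where
  "path_edges xs = set (zip xs (tl xs))"

definition is_path :: "('v \<Rightarrow> 'v \<Rightarrow> nat option) \<Rightarrow> 'v \<Rightarrow> 'v \<Rightarrow> 'v list \<Rightarrow> bool" where
  "is_path w s t xs \<longleftrightarrow> xs \<noteq> [] \<and> hd xs = s \<and> last xs = t \<and>
     (\<forall>(u,v)\<in>path_edges xs. w u v \<noteq> None)"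

definition simple_path :: "('v \<Rightarrow> 'v \<Rightarrow> nat option) \<Rightarrow> 'v \<Rightarrow> 'v \<Rightarrow> 'v list \<Rightarrow> bool" where
  "simple_path w s t xs \<longleftrightarrow> is_path w s t xs \<and> distinct xs"

definition path_weight :: "('v \<Rightarrow> 'v \<Rightarrow> nat option) \<Rightarrow> 'v list \<Rightarrow> nat" where
  "path_weight w xs = sum_list (map (\<lambda>(u,v). the (w u v)) (zip xs (tl xs)))"

definition shortest_path :: "('v \<Rightarrow> 'v \<Rightarrow> nat option) \<Rightarrow> 'v \<Rightarrow> 'v \<Rightarrow> 'v list \<Rightarrow> bool" where
  "shortest_path w s t P \<longleftrightarrow> is_path w s t P \<and>
     (\<forall>Q. is_path w s t Q \<longrightarrow> path_weight w P \<le> path_weight w Q)"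

definition avoids_edge_of :: "('v \<Rightarrow> 'v \<Rightarrow> nat option) \<Rightarrow> 'v \<Rightarrow> 'v \<Rightarrow> 'v list \<Rightarrow> 'v list \<Rightarrow> bool" where
  "avoids_edge_of w s t P Q \<longleftrightarrow> simple_path w s t Q \<and> (\<exists>e\<in>path_edges P. e \<notin> path_edges Q)"

definition second_simple_shortest_path ::
  "('v \<Rightarrow> 'v \<Rightarrow> nat option) \<Rightarrow> 'v \<Rightarrow> 'v \<Rightarrow> 'v list \<Rightarrow> 'v list \<Rightarrow> bool" where
  "second_simple_shortest_path w s t P Q \<longleftrightarrow> avoids_edge_of w s t P Q \<and>
     (\<forall>Q'. avoids_edge_of w s t P Q' \<longrightarrow> path_weight w Q \<le> path_weight w Q')"

text \<open>Vertices: L i = \<ell>_i, L' i = \<ell>'_i, R i = r_i, R' i = r'_i, LB i = overline \<ell>_i, P i = p_i.\<close>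
datatype vtx = L nat | L' nat | R nat | R' nat | LB nat | P nat

definition vertices :: "nat \<Rightarrow> vtx set" where
  "vertices k = (\<Union>i\<in>{1..k}. {L i, L' i, R i, R' i, LB i}) \<union> P ` {0..k}"

text \<open>Bit strings S of length k^2; S[m] (1-indexed) is S ! (m-1).\<close>
definition bit :: "bool list \<Rightarrow> nat \<Rightarrow> bool" where
  "bit S m = S ! (m - 1)"

fun wt :: "nat \<Rightarrow> bool list \<Rightarrow> bool list \<Rightarrow> vtx \<Rightarrow> vtx \<Rightarrow> nat option" where
  "wt k Sa Sb (L i) (R j) = (if 1 \<le> i \<and> i \<le> k \<and> j = i then Some k else None)"
| "wt k Sa Sb (R' i) (L' j) = (if 1 \<le> i \<and> i \<le> k \<and> j = i then Some k else None)"
| "wt k Sa Sb (P a) (P i) = (if 1 \<le> i \<and> i \<le> k \<and> a = i - 1 then Some 1 else None)"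
| "wt k Sa Sb (P a) (L i) = (if 1 \<le> i \<and> i \<le> k \<and> a = i - 1 then Some (4*k*(k-i+1)) else None)"
| "wt k Sa Sb (LB i) (P j) = (if 1 \<le> i \<and> i \<le> k \<and> j = i then Some (4*k*i) else None)"
| "wt k Sa Sb (L' j) (LB i) = (if 1 \<le> i \<and> i \<le> k \<and> 1 \<le> j \<and> j \<le> k \<and> bit Sa ((i-1)*k+j)
                               then Some k else None)"
| "wt k Sa Sb (R i) (R' j) = (if 1 \<le> i \<and> i \<le> k \<and> 1 \<le> j \<and> j \<le> k \<and> bit Sb ((i-1)*k+j)
                               then Some k else None)"
| "wt k Sa Sb _ _ = None"

definition Pi_path :: "nat \<Rightarrow> vtx list" where
  "Pi_path k = map P [0..<k+1]"

end

theory Submission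
  imports Defs
begin


fun isP :: "vtx \<Rightarrow> bool" where
  "isP (P _) = True" | "isP _ = False"

definition chain :: "('v \<Rightarrow> 'v \<Rightarrow> nat option) \<Rightarrow> 'v list \<Rightarrow> bool" where
  "chain w xs \<longleftrightarrow> (\<forall>(u,v)\<in>path_edges xs. w u v \<noteq> None)"

lemma pe_single[simp]: "path_edges [x] = {}"
  by (simp add: path_edges_def)
lemma pe_nil[simp]: "path_edges [] = {}"
  by (simp add: path_edges_def)
lemma pe_cons2[simp]: "path_edges (x # y # zs) = insert (x,y) (path_edges (y # zs))"
  by (simp add: path_edges_def)
lemma pw_single[simp]: "path_weight w [x] = 0"
  by (simp add: path_weight_def)
lemma pw_cons2[simp]: "path_weight w (x # y # zs) = the (w x y) + path_weight w (y # zs)"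
  by (simp add: path_weight_def)
lemma chain_single[simp]: "chain w [x]"
  by (simp add: chain_def)
lemma chain_cons2[simp]: "chain w (x # y # zs) \<longleftrightarrow> w x y \<noteq> None \<and> chain w (y # zs)"
  by (simp add: chain_def)

lemma pe_append: "xs \<noteq> [] \<Longrightarrow> ys \<noteq> [] \<Longrightarrow>
  path_edges (xs @ ys) = insert (last xs, hd ys) (path_edges xs \<union> path_edges ys)"
proof (induction xs)
  case Nil then show ?case by simp
next
  case (Cons x xs)
  show ?case
  proof (cases xs)
    case Nil
    then show ?thesis using Cons by (cases ys) auto
  next
    case (Cons y zs)
    then show ?thesis using Cons.IH Cons.prems by auto
  qed
qed

lemma pw_append: "xs \<noteq> [] \<Longrightarrow> ys \<noteq> [] \<Longrightarrow>
  path_weight w (xs @ ys) = path_weight w xs + the (w (last xs) (hd ys)) + path_weight w ys"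
proof (induction xs)
  case Nil then show ?case by simp
next
  case (Cons x xs)
  show ?case
  proof (cases xs)
    case Nil
    then show ?thesis using Cons by (cases ys) auto
  next
    case (Cons y zs)
    then show ?thesis using Cons.IH Cons.prems by auto
  qed
qed

lemma chain_append: "xs \<noteq> [] \<Longrightarrow> ys \<noteq> [] \<Longrightarrow>
  chain w (xs @ ys) \<longleftrightarrow> chain w xs \<and> chain w ys \<and> w (last xs) (hd ys) \<noteq> None"
  unfolding chain_def by (simp add: pe_append ball_Un conj_ac)

lemma pe_set: "(u,v) \<in> path_edges xs \<Longrightarrow> u \<in> set xs \<and> v \<in> set xs"
proof -
  assume a: "(u,v) \<in> path_edges xs"
  have "u \<in> set xs" using a unfolding path_edges_def by (auto dest: set_zip_leftD)
  moreover have "v \<in> set (tl xs)" using a unfolding path_edges_def by (auto dest: set_zip_rightD)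
  then have "v \<in> set xs" by (cases xs) auto
  ultimately show ?thesis by simp
qed

lemma succ_P: "wt k Sa Sb (P a) z \<noteq> None \<Longrightarrow> (z = P (Suc a) \<or> z = L (Suc a)) \<and> Suc a \<le> k"
  by (cases z) (auto split: if_splits)
lemma succ_L: "wt k Sa Sb (L i) z \<noteq> None \<Longrightarrow> z = R i \<and> 1 \<le> i \<and> i \<le> k"
  by (cases z) (auto split: if_splits)
lemma succ_R: "wt k Sa Sb (R i) z \<noteq> None \<Longrightarrow> \<exists>j. z = R' j \<and> 1 \<le> j \<and> j \<le> k \<and> bit Sb ((i-1)*k+j)"
  by (cases z) (auto split: if_splits)
lemma succ_R': "wt k Sa Sb (R' j) z \<noteq> None \<Longrightarrow> z = L' j"
  by (cases z) (auto split: if_splits)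
lemma succ_L': "wt k Sa Sb (L' j) z \<noteq> None \<Longrightarrow> \<exists>i'. z = LB i' \<and> 1 \<le> i' \<and> i' \<le> k \<and> bit Sa ((i'-1)*k+j)"
  by (cases z) (auto split: if_splits)
lemma succ_LB: "wt k Sa Sb (LB i) z \<noteq> None \<Longrightarrow> z = P i"
  by (cases z) (auto split: if_splits)

lemma spine: "a + n \<le> k \<Longrightarrow> chain (wt k Sa Sb) (map P [a..<a+Suc n])
   \<and> path_weight (wt k Sa Sb) (map P [a..<a+Suc n]) = n"
proof (induction n arbitrary: a)
  case 0 then show ?case by simp
next
  case (Suc n)
  have e: "[a..<a+Suc (Suc n)] = a # [Suc a..<Suc a + Suc n]"
    by (simp add: upt_conv_Cons)
  have e2: "[Suc a..<Suc a + Suc n] = Suc a # [Suc (Suc a)..<Suc a + Suc n]"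
    by (simp add: upt_conv_Cons)
  from Suc.IH[of "Suc a"] Suc.prems show ?case
    unfolding e by (simp add: upt_conv_Cons del: upt_Suc)
qed

lemma allP: "chain (wt k Sa Sb) xs \<Longrightarrow> xs \<noteq> [] \<Longrightarrow> hd xs = P a \<Longrightarrow> \<forall>v\<in>set xs. isP v
  \<Longrightarrow> xs = map P [a..<a + length xs]"
proof (induction xs arbitrary: a)
  case Nil then show ?case by simp
next
  case (Cons x xs)
  show ?case
  proof (cases xs)
    case Nil then show ?thesis using Cons by simp
  next
    case (Cons y zs)
    with Cons.prems have "wt k Sa Sb (P a) y \<noteq> None" by simp
    from succ_P[OF this] Cons.prems \<open>xs = y # zs\<close> have y: "y = P (Suc a)" by auto
    have "xs = map P [Suc a..<Suc a + length xs]"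
      using Cons.IH[of "Suc a"] Cons.prems \<open>xs = y # zs\<close> y by (simp del: upt_Suc)
    then show ?thesis using Cons.prems by (simp add: upt_conv_Cons del: upt_Suc)
  qed
qed



lemma decomp:
  "chain (wt k Sa Sb) xs \<Longrightarrow> xs \<noteq> [] \<Longrightarrow> hd xs = P a \<Longrightarrow> isP (last xs) \<Longrightarrow> \<exists>v\<in>set xs. \<not> isP v \<Longrightarrow>
   \<exists>i j i' ys. a < i \<and> i \<le> k \<and> 1 \<le> j \<and> j \<le> k \<and> 1 \<le> i' \<and> i' \<le> k \<and>
     bit Sb ((i-1)*k+j) \<and> bit Sa ((i'-1)*k+j) \<and>
     xs = map P [a..<i] @ [L i, R i, R' j, L' j, LB i'] @ ys \<and> ys \<noteq> [] \<and> hd ys = P i' \<and>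
     chain (wt k Sa Sb) ys \<and> last ys = last xs \<and>
     path_weight (wt k Sa Sb) xs = (i - 1 - a) + 4*k*(k-i+1) + 4*k + 4*k*i' + path_weight (wt k Sa Sb) ys"
proof (induction xs arbitrary: a)
  case Nil then show ?case by simp
next
  case (Cons x xs)
  have x: "x = P a" using Cons.prems by simp
  show ?case
  proof (cases xs)
    case Nil then show ?thesis using Cons.prems x by simp
  next
    case (Cons y zs)
    with Cons.prems x have ey: "wt k Sa Sb (P a) y \<noteq> None" and cy: "chain (wt k Sa Sb) xs" by simp_all
    from succ_P[OF ey] have ak: "Suc a \<le> k" by auto
    from succ_P[OF ey] have "y = P (Suc a) \<or> y = L (Suc a)" by auto
    then show ?thesis
    proof
      assume y: "y = P (Suc a)"
      have "\<exists>v\<in>set xs. \<not> isP v" using Cons.prems x by auto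
      moreover have "isP (last xs)" using Cons.prems \<open>xs = y # zs\<close> by simp
      ultimately obtain i j i' ys where H: "Suc a < i \<and> i \<le> k \<and> 1 \<le> j \<and> j \<le> k \<and> 1 \<le> i' \<and> i' \<le> k \<and>
     bit Sb ((i-1)*k+j) \<and> bit Sa ((i'-1)*k+j) \<and>
     xs = map P [Suc a..<i] @ [L i, R i, R' j, L' j, LB i'] @ ys \<and> ys \<noteq> [] \<and> hd ys = P i' \<and>
     chain (wt k Sa Sb) ys \<and> last ys = last xs \<and>
     path_weight (wt k Sa Sb) xs = (i - 1 - Suc a) + 4*k*(k-i+1) + 4*k + 4*k*i' + path_weight (wt k Sa Sb) ys"
        using Cons.IH[of "Suc a"] cy \<open>xs = y # zs\<close> y by auto
      have pw: "path_weight (wt k Sa Sb) (x # xs) = 1 + path_weight (wt k Sa Sb) xs"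
        using \<open>xs = y # zs\<close> y x ak by simp
      have up: "[a..<i] = a # [Suc a..<i]" using H by (simp add: upt_conv_Cons del: upt_Suc)
      have Hxs: "xs = map P [Suc a..<i] @ [L i, R i, R' j, L' j, LB i'] @ ys" using H by blast
      have Hpw: "path_weight (wt k Sa Sb) xs = (i - 1 - Suc a) + 4*k*(k-i+1) + 4*k + 4*k*i' + path_weight (wt k Sa Sb) ys"
        using H by blast
      have Hl: "last ys = last xs" using H by blast
      have f9: "x # xs = map P [a..<i] @ [L i, R i, R' j, L' j, LB i'] @ ys"
        unfolding up x Hxs by simp
      have fl: "last ys = last (x # xs)" using Hl \<open>xs = y # zs\<close> by simp
      have fa: "a < i" using H by linarith
      have fpw: "path_weight (wt k Sa Sb) (x # xs) = (i - 1 - a) + 4*k*(k-i+1) + 4*k + 4*k*i' + path_weight (wt k Sa Sb) ys"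
        using pw Hpw fa H by linarith
      show ?thesis
        apply (rule exI[of _ i], rule exI[of _ j], rule exI[of _ i'], rule exI[of _ ys])
        using H f9 fl fa fpw by blast
    next
      assume y: "y = L (Suc a)"
      define i where "i = Suc a"
      have "isP (last xs)" using Cons.prems \<open>xs = y # zs\<close> by simp
      then obtain z1 zs1 where zs: "zs = z1 # zs1" using \<open>xs = y # zs\<close> y by (cases zs) auto
      have "wt k Sa Sb (L i) z1 \<noteq> None" using cy \<open>xs = y # zs\<close> zs y i_def by simp
      from succ_L[OF this] have z1: "z1 = R i" by simp
      have "isP (last zs1)" "zs1 \<noteq> []" using \<open>isP (last xs)\<close> \<open>xs = y # zs\<close> zs z1
        by (auto split: if_splits)
      then obtain z2 zs2 where zs1: "zs1 = z2 # zs2" by (cases zs1) auto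
      have "wt k Sa Sb (R i) z2 \<noteq> None" using cy \<open>xs = y # zs\<close> zs zs1 z1 by simp
      from succ_R[OF this] obtain j where z2: "z2 = R' j" and j: "1 \<le> j" "j \<le> k" "bit Sb ((i-1)*k+j)" by blast
      have "isP (last zs2)" "zs2 \<noteq> []" using \<open>isP (last xs)\<close> \<open>xs = y # zs\<close> zs z1 zs1 z2
        by (auto split: if_splits)
      then obtain z3 zs3 where zs2: "zs2 = z3 # zs3" by (cases zs2) auto
      have "wt k Sa Sb (R' j) z3 \<noteq> None" using cy \<open>xs = y # zs\<close> zs zs1 zs2 z2 by simp
      from succ_R'[OF this] have z3: "z3 = L' j" .
      have "isP (last zs3)" "zs3 \<noteq> []" using \<open>isP (last xs)\<close> \<open>xs = y # zs\<close> zs z1 zs1 z2 zs2 z3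
        by (auto split: if_splits)
      then obtain z4 zs4 where zs3: "zs3 = z4 # zs4" by (cases zs3) auto
      have "wt k Sa Sb (L' j) z4 \<noteq> None" using cy \<open>xs = y # zs\<close> zs zs1 zs2 zs3 z3 by simp
      from succ_L'[OF this] obtain i' where z4: "z4 = LB i'" and i': "1 \<le> i'" "i' \<le> k" "bit Sa ((i'-1)*k+j)" by blast
      have "isP (last zs4)" "zs4 \<noteq> []" using \<open>isP (last xs)\<close> \<open>xs = y # zs\<close> zs z1 zs1 z2 zs2 z3 zs3 z4
        by (auto split: if_splits)
      then obtain z5 zs5 where zs4: "zs4 = z5 # zs5" by (cases zs4) auto
      have "wt k Sa Sb (LB i') z5 \<noteq> None" using cy \<open>xs = y # zs\<close> zs zs1 zs2 zs3 zs4 z4 by simp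
      from succ_LB[OF this] have z5: "z5 = P i'" .
      have xs: "xs = [L i, R i, R' j, L' j, LB i'] @ zs4"
        using \<open>xs = y # zs\<close> zs zs1 zs2 zs3 z1 z2 z3 z4 y i_def by simp
      have ch: "chain (wt k Sa Sb) zs4" using cy xs zs4 by simp
      have pw: "path_weight (wt k Sa Sb) (x # xs) = 4*k*(k-i+1) + k + k + k + k + 4*k*i' + path_weight (wt k Sa Sb) zs4"
        using xs zs4 z5 x i_def ak j i' by simp
      show ?thesis
        apply (rule exI[of _ i], rule exI[of _ j], rule exI[of _ i'], rule exI[of _ zs4])
        apply (intro conjI)
        using ak j i' zs4 z5 ch apply (simp_all add: i_def)
        subgoal using x xs i_def by simp
        subgoal using xs zs4 by simp
        subgoal using pw i_def by simp
        done
    qed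
  qed
qed



lemma Qall:
  assumes "is_path (wt k Sa Sb) (P 0) (P k) Q" "\<forall>v\<in>set Q. isP v"
  shows "Q = Pi_path k"
proof -
  obtain n where n: "n = length Q" by simp
  have Q: "Q = map P [0..<n]"
    using allP[of k Sa Sb Q 0] assms n unfolding is_path_def chain_def by simp
  have "Q \<noteq> []" using assms unfolding is_path_def by simp
  then have n0: "0 < n" using Q by simp
  have "last Q = P (n - 1)" using Q n0 by (simp add: last_map)
  then have "n = k + 1" using assms n0 unfolding is_path_def by auto
  then show ?thesis using Q unfolding Pi_path_def by simp
qed

lemma lowerB:
  assumes k1: "1 \<le> k"
    and nc: "\<And>i j. 1\<le>i \<Longrightarrow> i\<le>k \<Longrightarrow> 1\<le>j \<Longrightarrow> j\<le>k \<Longrightarrow> bit Sb ((i-1)*k+j) \<Longrightarrow> bit Sa ((i-1)*k+j) \<Longrightarrow> False"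
    and av: "avoids_edge_of (wt k Sa Sb) (P 0) (P k) (Pi_path k) Q"
  shows "4*k^2 + 12*k \<le> path_weight (wt k Sa Sb) Q"
proof -
  from av have ip: "is_path (wt k Sa Sb) (P 0) (P k) Q" and dQ: "distinct Q"
    and ex: "\<exists>e\<in>path_edges (Pi_path k). e \<notin> path_edges Q"
    unfolding avoids_edge_of_def simple_path_def by auto
  have ch: "chain (wt k Sa Sb) Q" and Qne: "Q \<noteq> []" and hdQ: "hd Q = P 0" and lQ: "last Q = P k"
    using ip unfolding is_path_def chain_def by auto
  have "\<exists>v\<in>set Q. \<not> isP v"
  proof (rule ccontr)
    assume "\<not> (\<exists>v\<in>set Q. \<not> isP v)"
    then have "Q = Pi_path k" using Qall[OF ip] by auto
    with ex show False by simp
  qed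
  from decomp[OF ch Qne hdQ _ this] lQ obtain i j i' ys where D:
    "0 < i" "i \<le> k" "1 \<le> j" "j \<le> k" "1 \<le> i'" "i' \<le> k"
     "bit Sb ((i-1)*k+j)" "bit Sa ((i'-1)*k+j)"
     "Q = map P [0..<i] @ [L i, R i, R' j, L' j, LB i'] @ ys" "ys \<noteq> []" "hd ys = P i'"
     "chain (wt k Sa Sb) ys" "last ys = last Q"
     "path_weight (wt k Sa Sb) Q = (i - 1 - 0) + 4*k*(k-i+1) + 4*k + 4*k*i' + path_weight (wt k Sa Sb) ys"
    by auto
  consider "i' = i" | "i < i'" | "i' < i" by linarith
  then show ?thesis
  proof cases
    case 1 then show ?thesis using nc[of i j] D by auto
  next
    case 2
    have "k+2 \<le> k-i+1+i'" using 2 D by linarith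
    then have "4*k*(k+2) \<le> 4*k*(k-i+1+i')" by (rule mult_le_mono2)
    also have "\<dots> = 4*k*(k-i+1) + 4*k*i'" by (simp add: distrib_left)
    finally have a: "4*k*(k+2) \<le> 4*k*(k-i+1) + 4*k*i'" .
    have b: "4*k^2+12*k = 4*k*(k+2) + 4*k" by (simp add: power2_eq_square algebra_simps)
    show ?thesis using a b D(14) by linarith
  next
    case 3
    have dis: "set (map P [0..<i]) \<inter> set ys = {}" using dQ D(9) by auto
    have "\<exists>v\<in>set ys. \<not> isP v"
    proof (rule ccontr)
      assume "\<not> (\<exists>v\<in>set ys. \<not> isP v)"
      obtain n where n: "n = length ys" by simp
      have ysP: "ys = map P [i'..<i' + n]" using allP[OF D(12) D(10) D(11)] n \<open>\<not> (\<exists>v\<in>set ys. \<not> isP v)\<close> by auto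
      have n0: "0 < n" using D(10) ysP by auto
      have "last ys = P (i' + n - 1)" using ysP n0 by (simp add: last_map)
      then have "i' + n - 1 = k" using D(13) lQ by simp
      then have "i - 1 \<in> {i'..<i' + n}" using 3 D(2) by auto
      then have "P (i-1) \<in> set ys" using ysP by (simp only: set_map set_upt) (rule imageI)
      moreover have "P (i-1) \<in> set (map P [0..<i])" using D(1) by auto
      ultimately show False using dis by blast
    qed
    from decomp[OF D(12) D(10) D(11) _ this] D(13) lQ obtain i2 j2 i2' ys2 where E:
      "i' < i2" "i2 \<le> k" "1 \<le> i2'" "i2' \<le> k"
      "ys = map P [i'..<i2] @ [L i2, R i2, R' j2, L' j2, LB i2'] @ ys2" "ys2 \<noteq> []" "hd ys2 = P i2'"
      "path_weight (wt k Sa Sb) ys = (i2 - 1 - i') + 4*k*(k-i2+1) + 4*k + 4*k*i2' + path_weight (wt k Sa Sb) ys2"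
      by auto
    have "P i2' \<in> set ys" using E(5,6,7) by (cases ys2) auto
    then have "P i2' \<notin> set (map P [0..<i])" using dis by blast
    then have ii: "i \<le> i2'" by auto
    have "k+1 \<le> k-i+1+i2'" using ii D by linarith
    then have "4*k*(k+1) \<le> 4*k*(k-i+1+i2')" by (rule mult_le_mono2)
    also have "\<dots> = 4*k*(k-i+1) + 4*k*i2'" by (simp add: distrib_left)
    finally have a: "4*k*(k+1) \<le> 4*k*(k-i+1) + 4*k*i2'" .
    have "2 \<le> k-i2+1+i'" using E D by linarith
    then have "4*k*2 \<le> 4*k*(k-i2+1+i')" by (rule mult_le_mono2)
    also have "\<dots> = 4*k*(k-i2+1) + 4*k*i'" by (simp add: distrib_left)
    finally have c: "4*k*2 \<le> 4*k*(k-i2+1) + 4*k*i'" .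
    have b: "4*k^2+12*k = 4*k*(k+1) + 4*k*2" by (simp add: power2_eq_square algebra_simps)
    show ?thesis using a b c D(14) E(8) by linarith
  qed
qed




lemma is_path_chain: "is_path w s t xs \<longleftrightarrow> xs \<noteq> [] \<and> hd xs = s \<and> last xs = t \<and> chain w xs"
  unfolding is_path_def chain_def by simp

lemma Pi_facts:
  assumes "1 \<le> k"
  shows "is_path (wt k Sa Sb) (P 0) (P k) (Pi_path k) \<and> path_weight (wt k Sa Sb) (Pi_path k) = k"
proof -
  have e: "Pi_path k = map P [0..<0 + Suc k]" unfolding Pi_path_def by simp
  have "chain (wt k Sa Sb) (Pi_path k) \<and> path_weight (wt k Sa Sb) (Pi_path k) = k"
    unfolding e by (rule spine) simp
  moreover have "Pi_path k \<noteq> []" "hd (Pi_path k) = P 0" "last (Pi_path k) = P k"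
    unfolding e by (simp_all add: last_map hd_map del: upt_Suc)
  ultimately show ?thesis by (simp add: is_path_chain)
qed

lemma shortestPi:
  assumes "1 \<le> k"
  shows "shortest_path (wt k Sa Sb) (P 0) (P k) (Pi_path k)"
  unfolding shortest_path_def
proof (intro conjI allI impI)
  show "is_path (wt k Sa Sb) (P 0) (P k) (Pi_path k)" using Pi_facts[OF assms] by blast
next
  fix Q assume ip: "is_path (wt k Sa Sb) (P 0) (P k) Q"
  have pw: "path_weight (wt k Sa Sb) (Pi_path k) = k" using Pi_facts[OF assms] by blast
  show "path_weight (wt k Sa Sb) (Pi_path k) \<le> path_weight (wt k Sa Sb) Q"
  proof (cases "\<exists>v\<in>set Q. \<not> isP v")
    case False
    then have "Q = Pi_path k" using Qall[OF ip] by auto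
    then show ?thesis by simp
  next
    case True
    have ch: "chain (wt k Sa Sb) Q" and Qne: "Q \<noteq> []" and hdQ: "hd Q = P 0" and lQ: "last Q = P k"
      using ip unfolding is_path_chain by auto
    from decomp[OF ch Qne hdQ _ True] lQ obtain i j i' ys where D:
      "0 < i" "i \<le> k"
      "path_weight (wt k Sa Sb) Q = (i - 1 - 0) + 4*k*(k-i+1) + 4*k + 4*k*i' + path_weight (wt k Sa Sb) ys"
      by auto
    have "k \<le> 4*k" by simp
    then show ?thesis using pw D(3) by linarith
  qed
qed

lemma witness:
  assumes i: "1 \<le> i" "i \<le> k" and j: "1 \<le> j" "j \<le> k"
    and b: "bit Sb ((i-1)*k+j)" "bit Sa ((i-1)*k+j)"
  defines "Qw \<equiv> map P [0..<i] @ ([L i, R i, R' j, L' j, LB i] @ map P [i..<k+1])"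
  shows "avoids_edge_of (wt k Sa Sb) (P 0) (P k) (Pi_path k) Qw \<and>
         path_weight (wt k Sa Sb) Qw = 4*k^2 + 9*k - 1"
proof -
  define A where "A = map P [0..<i]"
  define B where "B = [L i, R i, R' j, L' j, LB i]"
  define C where "C = map P [i..<k+1]"
  have Qw: "Qw = A @ (B @ C)" unfolding Qw_def A_def B_def C_def by simp
  have eA: "A = map P [0..<0 + Suc (i-1)]" unfolding A_def using i by simp
  have sA: "chain (wt k Sa Sb) A \<and> path_weight (wt k Sa Sb) A = i - 1"
    unfolding eA by (rule spine) (use i in simp)
  have eC: "C = map P [i..<i + Suc (k-i)]" unfolding C_def using i by simp
  have sC: "chain (wt k Sa Sb) C \<and> path_weight (wt k Sa Sb) C = k - i"
    unfolding eC by (rule spine) (use i in simp)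
  have Ane: "A \<noteq> []" and Cne: "C \<noteq> []" and Bne: "B \<noteq> []" using i unfolding A_def C_def B_def by auto
  have lA: "last A = P (i - 1)" unfolding A_def using i by (simp add: last_map del: upt_Suc)
  have hA: "hd A = P 0" unfolding A_def using i by (simp add: hd_map del: upt_Suc)
  have hC: "hd C = P i" unfolding C_def using i by (simp add: hd_map del: upt_Suc)
  have lC: "last C = P k" unfolding C_def using i by (simp add: last_map del: upt_Suc)
  have chB: "chain (wt k Sa Sb) B" unfolding B_def using i j b by simp
  have pwB: "path_weight (wt k Sa Sb) B = 4*k" unfolding B_def using i j b by simp
  have wBC: "wt k Sa Sb (last B) (hd C) = Some (4*k*i)" unfolding B_def using i hC by simp
  have wAB: "wt k Sa Sb (last A) (hd (B @ C)) = Some (4*k*(k-i+1))" unfolding B_def using i lA by simp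
  have BCne: "B @ C \<noteq> []" using Bne by simp
  have chBC: "chain (wt k Sa Sb) (B @ C)" using chain_append[OF Bne Cne] chB sC wBC by simp
  have ch: "chain (wt k Sa Sb) Qw" unfolding Qw using chain_append[OF Ane BCne] chBC sA wAB by simp
  have pwBC: "path_weight (wt k Sa Sb) (B @ C) = 4*k + 4*k*i + (k - i)"
    using pw_append[OF Bne Cne] pwB sC wBC by simp
  have pw: "path_weight (wt k Sa Sb) Qw = (i - 1) + 4*k*(k-i+1) + 4*k + 4*k*i + (k - i)"
    unfolding Qw using pw_append[OF Ane BCne] pwBC sA wAB by simp
  have "4*k*(k-i+1) + 4*k*i = 4*k*(k-i+1+i)" by (simp add: distrib_left)
  also have "\<dots> = 4*k*k + 4*k" using i by simp
  finally have ar: "4*k*(k-i+1) + 4*k*i = 4*k*k + 4*k" .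
  have pwv: "path_weight (wt k Sa Sb) Qw = 4*k^2 + 9*k - 1"
    using pw ar i by (simp add: power2_eq_square)
  have injP: "inj_on P X" for X by (simp add: inj_on_def)
  have dA: "distinct A" unfolding A_def by (simp add: distinct_map injP del: upt_Suc)
  have dC: "distinct C" unfolding C_def by (simp add: distinct_map injP del: upt_Suc)
  have dB: "distinct B" unfolding B_def by simp
  have BC: "set B \<inter> set C = {}" unfolding B_def C_def by (auto simp del: upt_Suc)
  have ABC: "set A \<inter> set (B @ C) = {}" unfolding A_def B_def C_def by (auto simp del: upt_Suc)
  have dist: "distinct Qw" unfolding Qw using dA dB dC BC ABC by (simp only: distinct_append)
  have ip: "is_path (wt k Sa Sb) (P 0) (P k) Qw"
    unfolding is_path_chain using ch Qw Ane hA lC Cne by simp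
  have PiAC: "Pi_path k = A @ C" unfolding Pi_path_def A_def C_def
  proof -
    have "[0..<i + (k+1-i)] = [0..<i] @ [i..<i + (k+1-i)]" by (rule upt_add_eq_append) simp
    moreover have "i + (k+1-i) = k+1" using i by simp
    ultimately have "[0..<k+1] = [0..<i] @ [i..<k+1]" using i by (simp del: upt_Suc)
    then show "map P [0..<k + 1] = map P [0..<i] @ map P [i..<k + 1]" by (simp del: upt_Suc)
  qed
  have e1: "(P (i-1), P i) \<in> path_edges (Pi_path k)" unfolding PiAC using pe_append[OF Ane Cne] lA hC by simp
  have e2: "(P (i-1), P i) \<notin> path_edges Qw"
  proof
    assume a: "(P (i-1), P i) \<in> path_edges Qw"
    have peBC: "path_edges (B @ C) = insert (LB i, P i) (path_edges B \<union> path_edges C)"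
      using pe_append[OF Bne Cne] hC unfolding B_def by simp
    have peB: "path_edges B = {(L i, R i), (R i, R' j), (R' j, L' j), (L' j, LB i)}" unfolding B_def by simp
    have "path_edges Qw = insert (P (i-1), L i) (path_edges A \<union> path_edges (B @ C))"
      unfolding Qw using pe_append[OF Ane BCne] Bne lA unfolding B_def by simp
    with a peBC peB have "(P (i-1), P i) \<in> path_edges A \<or> (P (i-1), P i) \<in> path_edges C" by auto
    then show False
    proof
      assume "(P (i-1), P i) \<in> path_edges A"
      then have "P i \<in> set A" by (blast dest: pe_set)
      then show False unfolding A_def by auto
    next
      assume "(P (i-1), P i) \<in> path_edges C"
      then have "P (i-1) \<in> set C" by (blast dest: pe_set)
      then show False unfolding C_def using i by auto
    qed
  qed
  show ?thesis unfolding avoids_edge_of_def simple_path_def using ip dist e1 e2 pwv by blast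
qed




theorem mainTheorem1:
  fixes k :: nat and Sa Sb :: "bool list"
  assumes "k \<ge> 1" and "length Sa = k^2" and "length Sb = k^2"
  shows "shortest_path (wt k Sa Sb) (P 0) (P k) (Pi_path k)
    \<and> ((\<exists>m. 1 \<le> m \<and> m \<le> k^2 \<and> bit Sa m \<and> bit Sb m) \<longrightarrow>
         (\<exists>Q. second_simple_shortest_path (wt k Sa Sb) (P 0) (P k) (Pi_path k) Q) \<and>
         (\<forall>Q. second_simple_shortest_path (wt k Sa Sb) (P 0) (P k) (Pi_path k) Q \<longrightarrow>
              path_weight (wt k Sa Sb) Q \<le> 4*k^2 + 9*k - 1))
    \<and> (\<not>(\<exists>m. 1 \<le> m \<and> m \<le> k^2 \<and> bit Sa m \<and> bit Sb m) \<longrightarrow>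
         (\<forall>Q. avoids_edge_of (wt k Sa Sb) (P 0) (P k) (Pi_path k) Q \<longrightarrow>
              path_weight (wt k Sa Sb) Q \<ge> 4*k^2 + 12*k))"
proof (intro conjI impI)
  show "shortest_path (wt k Sa Sb) (P 0) (P k) (Pi_path k)" using shortestPi assms(1) by blast
next
  assume "\<exists>m. 1 \<le> m \<and> m \<le> k^2 \<and> bit Sa m \<and> bit Sb m"
  then obtain m where m: "1 \<le> m" "m \<le> k^2" "bit Sa m" "bit Sb m" by blast
  define i where "i = (m-1) div k + 1"
  define j where "j = (m-1) mod k + 1"
  have k0: "0 < k" using assms(1) by simp
  have mij: "(i-1)*k + j = m" unfolding i_def j_def using m(1) div_mult_mod_eq[of "m-1" k] by simp
  have "m - 1 < k * k" using m(1,2) k0 by (simp add: power2_eq_square)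
  then have "(m-1) div k < k" using k0 by (simp add: div_less_iff_less_mult)
  then have i: "1 \<le> i" "i \<le> k" unfolding i_def by auto
  have j: "1 \<le> j" "j \<le> k" unfolding j_def using k0 mod_less_divisor[OF k0, of "m-1"] by auto
  define Qw where "Qw = map P [0..<i] @ ([L i, R i, R' j, L' j, LB i] @ map P [i..<k+1])"
  have W: "avoids_edge_of (wt k Sa Sb) (P 0) (P k) (Pi_path k) Qw \<and>
         path_weight (wt k Sa Sb) Qw = 4*k^2 + 9*k - 1"
    unfolding Qw_def by (rule witness[OF i j]) (use m mij in simp_all)
  define Pr where "Pr n \<longleftrightarrow> (\<exists>Q. avoids_edge_of (wt k Sa Sb) (P 0) (P k) (Pi_path k) Q \<and> path_weight (wt k Sa Sb) Q = n)" for n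
  have "Pr (path_weight (wt k Sa Sb) Qw)" unfolding Pr_def using W by blast
  then have "Pr (LEAST n. Pr n)" by (rule LeastI)
  then obtain Q0 where Q0: "avoids_edge_of (wt k Sa Sb) (P 0) (P k) (Pi_path k) Q0"
    "path_weight (wt k Sa Sb) Q0 = (LEAST n. Pr n)" unfolding Pr_def by blast
  have "second_simple_shortest_path (wt k Sa Sb) (P 0) (P k) (Pi_path k) Q0"
    unfolding second_simple_shortest_path_def
  proof (intro conjI allI impI)
    show "avoids_edge_of (wt k Sa Sb) (P 0) (P k) (Pi_path k) Q0" by (rule Q0(1))
  next
    fix Q' assume "avoids_edge_of (wt k Sa Sb) (P 0) (P k) (Pi_path k) Q'"
    then have "Pr (path_weight (wt k Sa Sb) Q')" unfolding Pr_def by blast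
    then show "path_weight (wt k Sa Sb) Q0 \<le> path_weight (wt k Sa Sb) Q'" unfolding Q0(2) by (rule Least_le)
  qed
  then show "\<exists>Q. second_simple_shortest_path (wt k Sa Sb) (P 0) (P k) (Pi_path k) Q" by blast
  show "\<forall>Q. second_simple_shortest_path (wt k Sa Sb) (P 0) (P k) (Pi_path k) Q \<longrightarrow>
              path_weight (wt k Sa Sb) Q \<le> 4*k^2 + 9*k - 1"
  proof (intro allI impI)
    fix Q assume "second_simple_shortest_path (wt k Sa Sb) (P 0) (P k) (Pi_path k) Q"
    then have "path_weight (wt k Sa Sb) Q \<le> path_weight (wt k Sa Sb) Qw"
      unfolding second_simple_shortest_path_def using W by blast
    then show "path_weight (wt k Sa Sb) Q \<le> 4*k^2 + 9*k - 1" using W by simp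
  qed
next
  assume nex: "\<not>(\<exists>m. 1 \<le> m \<and> m \<le> k^2 \<and> bit Sa m \<and> bit Sb m)"
  have nc: False if "1\<le>i" "i\<le>k" "1\<le>j" "j\<le>k" "bit Sb ((i-1)*k+j)" "bit Sa ((i-1)*k+j)" for i j
  proof -
    have "(i-1)*k \<le> (k-1)*k" using that by simp
    moreover have "(k-1)*k + k = k^2" using assms(1) by (cases k) (simp_all add: power2_eq_square)
    ultimately have "(i-1)*k+j \<le> k^2" using that by linarith
    then show False using nex that by auto
  qed
  show "\<forall>Q. avoids_edge_of (wt k Sa Sb) (P 0) (P k) (Pi_path k) Q \<longrightarrow>
              path_weight (wt k Sa Sb) Q \<ge> 4*k^2 + 12*k"
  proof (intro allI impI)
    fix Q assume a: "avoids_edge_of (wt k Sa Sb) (P 0) (P k) (Pi_path k) Q"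
    show "path_weight (wt k Sa Sb) Q \<ge> 4*k^2 + 12*k"
      by (rule lowerB[OF assms(1) _ a]) (use nc in blast)
  qed
qed


end
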